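(* The assignment $r\mapsto\mathfrak g(r)$ is a bijection between the set of normalized formal generalized $r$-matrices $r\in(\mathfrak g\otimes\mathfrak g)(\!(x)\!)[\![y]\!]$ and the set of Lie subalgebras $W\subseteq\mathfrak g(\!(z)\!)$ satisfying $\mathfrak g(\!(z)\!)=\mathfrak g[\![z]\!]\oplus W$ (direct sum of vector spaces).
   Context: $\Bbbk$ is a field of characteristic $0$, $\mathfrak g$ a finite-dimensional semisimple Lie algebra over $\Bbbk$ of dimension $d$ with Killing form $\kappa$, $\{b_i\}_{i=1}^d$ a $\kappa$-orthonormal basis and $\gamma=\sum_i b_i\otimes b_i$. $\frac{1}{x-y}$ denotes $\sum_{k\ge0}x^{-k-1}y^k\in\Bbbk(\!(x)\!)[\![y]\!]$. A series $r\in(\mathfrak g\otimes\mathfrak g)(\!(x)\!)[\![y]\!]$ is in standard form if $r(x,y)=\frac{\lambda(y)}{x-y}\gamma+r_0(x,y)$ with $\lambda\in\Bbbk[\![z]\!]^\times$, $r_0\in(\mathfrak g\otimes\mathfrak g)[\![x,y]\!]$; normalized if $\lambda=1$. Put $\bar r(x,y)=\frac{\lambda(x)}{x-y}\gamma-\tau(r_0(y,x))$ with $\tau$ the $\Bbbk[\![x,y]\!]$-linear extension of $a\otimes b\mapsto b\otimes a$. For $s\in(\mathfrak g\otimes\mathfrak g)(\!(x)\!)[\![y]\!]$ and $ij\in\{12,13,23\}$, $s^{ij}$ is the element of $(U(\mathfrak g)^{\otimes3})\otimes\Bbbk(\!(x_1)\!)(\!(x_2)\!)[\![x_3]\!]$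 obtained by substituting $(x,y)=(x_i,x_j)$ and placing the tensor factors in positions $i,j$. A (normalized) formal generalized $r$-matrix is a series in (normalized) standard form with $[r^{12},r^{13}]+[r^{12},r^{23}]+[r^{13},\bar r^{23}]=0$. For $s=\sum_{k\ge0}\sum_{i=1}^d s_{k,i}(x)\otimes b_iy^k$ (with $s_{k,i}\in\mathfrak g(\!(x)\!)$), $\mathfrak g(s):=\mathrm{span}_\Bbbk\{s_{k,i}(z)\}\subseteq\mathfrak g(\!(z)\!)$. *)

theory Defs
  imports "HOL-Computational_Algebra.Formal_Laurent_Series" "HOL-Library.Function_Algebras"
begin

text \<open>g has the finite basis b_i (i ranging over the finite type 'i); its bracket is
  given by structure constants: [b_i, b_j] = sum_p c i j p b_p.  Elements of g are coordinate
  vectors 'i => 'k; elements of g((z)) = g (x) k((z)) are coordinate vectors 'i => 'k fls.\<close>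

definition lie_br :: "('i::finite \<Rightarrow> 'i \<Rightarrow> 'i \<Rightarrow> 'a::comm_ring_1) \<Rightarrow> ('i \<Rightarrow> 'a) \<Rightarrow> ('i \<Rightarrow> 'a) \<Rightarrow> ('i \<Rightarrow> 'a)" where
  "lie_br c u v = (\<lambda>p. \<Sum>i\<in>UNIV. \<Sum>j\<in>UNIV. u i * v j * c i j p)"

definition is_lie_algebra_sc :: "('i::finite \<Rightarrow> 'i \<Rightarrow> 'i \<Rightarrow> 'k::field) \<Rightarrow> bool" where
  "is_lie_algebra_sc c \<longleftrightarrow>
     (\<forall>i j p. c i j p = - c j i p) \<and>
     (\<forall>i j l p. (\<Sum>m\<in>UNIV. c j l m * c i m p + c l i m * c j m p + c i j m * c l m p) = 0)"

definition vscale :: "'k::field \<Rightarrow> ('i \<Rightarrow> 'k) \<Rightarrow> ('i \<Rightarrow> 'k)" where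
  "vscale a v = (\<lambda>i. a * v i)"

definition lie_ideal_sc :: "('i::finite \<Rightarrow> 'i \<Rightarrow> 'i \<Rightarrow> 'k::field) \<Rightarrow> ('i \<Rightarrow> 'k) set \<Rightarrow> bool" where
  "lie_ideal_sc c I \<longleftrightarrow> module.subspace vscale I \<and> (\<forall>x\<in>I. \<forall>y. lie_br c y x \<in> I)"

fun derived_sc :: "('i::finite \<Rightarrow> 'i \<Rightarrow> 'i \<Rightarrow> 'k::field) \<Rightarrow> ('i \<Rightarrow> 'k) set \<Rightarrow> nat \<Rightarrow> ('i \<Rightarrow> 'k) set" where
  "derived_sc c I 0 = I"
| "derived_sc c I (Suc n) =
     module.span vscale {lie_br c x y | x y. x \<in> derived_sc c I n \<and> y \<in> derived_sc c I n}"

definition semisimple_sc :: "('i::finite \<Rightarrow> 'i \<Rightarrow> 'i \<Rightarrow> 'k::field) \<Rightarrow> bool" where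
  "semisimple_sc c \<longleftrightarrow>
     (\<forall>I. lie_ideal_sc c I \<and> (\<exists>n. derived_sc c I n = {0}) \<longrightarrow> I = {0})"

text \<open>Killing form on basis vectors: kappa(b_i,b_j) = tr(ad b_i o ad b_j)\<close>
definition killing_sc :: "('i::finite \<Rightarrow> 'i \<Rightarrow> 'i \<Rightarrow> 'k::field) \<Rightarrow> 'i \<Rightarrow> 'i \<Rightarrow> 'k" where
  "killing_sc c i j = (\<Sum>l\<in>UNIV. \<Sum>m\<in>UNIV. c j l m * c i m l)"

text \<open>An element of (g (x) g)((x))[[y]] is given by its coordinates r i j in k((x))[[y]]
  (coefficient of b_i (x) b_j); k((x))[[y]] is 'k fls fps (power series in y with Laurent
  series coefficients in x).  k[[x,y]] is 'k fps fps (power series in y, coefficients in k[[x]]).\<close>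

text \<open>1/(x-y) = sum_k x^(-k-1) y^k\<close>
definition cauchy_kernel :: "'k::field fls fps" where
  "cauchy_kernel = Abs_fps (\<lambda>n. fls_X_intpow (- int n - 1))"

text \<open>coordinates of gamma/(x-y)\<close>
definition gamma_kernel :: "'i \<Rightarrow> 'i \<Rightarrow> 'k::field fls fps" where
  "gamma_kernel i j = (if i = j then cauchy_kernel else 0)"

definition embed2 :: "'k::field fps fps \<Rightarrow> 'k fls fps" where
  "embed2 f = Abs_fps (\<lambda>n. fps_to_fls (fps_nth f n))"

definition normalized_standard_form :: "('i \<Rightarrow> 'i \<Rightarrow> 'k::field fls fps) \<Rightarrow> bool" where
  "normalized_standard_form r \<longleftrightarrow>
     (\<exists>r0 :: 'i \<Rightarrow> 'i \<Rightarrow> 'k fps fps. \<forall>i j. r i j = gamma_kernel i j + embed2 (r0 i j))"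

text \<open>the part r_0 in k[[x,y]] of a series in standard form (nonnegative powers of x)\<close>
definition reg_part2 :: "'k::field fls fps \<Rightarrow> 'k fps fps" where
  "reg_part2 s = Abs_fps (\<lambda>n. fls_regpart (fps_nth s n))"

definition swap2 :: "'k::field fps fps \<Rightarrow> 'k fps fps" where
  "swap2 f = Abs_fps (\<lambda>n. Abs_fps (\<lambda>m. f $ m $ n))"

text \<open>bar r (normalized case, lambda = 1): gamma/(x-y) - tau(r_0(y,x))\<close>
definition rbar :: "('i \<Rightarrow> 'i \<Rightarrow> 'k::field fls fps) \<Rightarrow> 'i \<Rightarrow> 'i \<Rightarrow> 'k fls fps" where
  "rbar r i j = gamma_kernel i j - embed2 (swap2 (reg_part2 (r j i)))"

text \<open>k((x1))((x2))[[x3]] is 'k fls fls fps; the substitutions (x,y) := (x_i,x_j)\<close>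

definition fls_lift :: "'k::field fls \<Rightarrow> 'k fls fls" where
  "fls_lift f = Abs_fls (\<lambda>m. fls_const (fls_nth f m))"

definition sub12 :: "'k::field fls fps \<Rightarrow> 'k fls fls fps" where
  "sub12 s = fps_const (fps_to_fls s)"

definition sub13 :: "'k::field fls fps \<Rightarrow> 'k fls fls fps" where
  "sub13 s = Abs_fps (\<lambda>n. fls_const (fps_nth s n))"

definition sub23 :: "'k::field fls fps \<Rightarrow> 'k fls fls fps" where
  "sub23 s = Abs_fps (\<lambda>n. fls_lift (fps_nth s n))"

definition K3 :: "'k::field \<Rightarrow> 'k fls fls fps" where
  "K3 a = fps_const (fls_const (fls_const a))"

text \<open>Coordinates (w.r.t. b_p (x) b_q (x) b_s) of
  [r^12, r^13] + [r^12, r^23] + [r^13, rbar^23]; all three commutators lie in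
  g (x) g (x) g (x) k((x1))((x2))[[x3]] inside U(g)^(x)3 (x) k((x1))((x2))[[x3]].\<close>
definition gcybe_coord ::
  "('i::finite \<Rightarrow> 'i \<Rightarrow> 'i \<Rightarrow> 'k::field) \<Rightarrow> ('i \<Rightarrow> 'i \<Rightarrow> 'k fls fps) \<Rightarrow> 'i \<Rightarrow> 'i \<Rightarrow> 'i \<Rightarrow> 'k fls fls fps" where
  "gcybe_coord c r p q s =
      (\<Sum>i\<in>UNIV. \<Sum>k\<in>UNIV. K3 (c i k p) * sub12 (r i q) * sub13 (r k s))
    + (\<Sum>j\<in>UNIV. \<Sum>k\<in>UNIV. K3 (c j k q) * sub12 (r p j) * sub23 (r k s))
    + (\<Sum>j\<in>UNIV. \<Sum>l\<in>UNIV. K3 (c j l s) * sub13 (r p j) * sub23 (rbar r q l))"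

definition normalized_formal_generalized_r_matrix ::
  "('i::finite \<Rightarrow> 'i \<Rightarrow> 'i \<Rightarrow> 'k::field) \<Rightarrow> ('i \<Rightarrow> 'i \<Rightarrow> 'k fls fps) \<Rightarrow> bool" where
  "normalized_formal_generalized_r_matrix c r \<longleftrightarrow>
     normalized_standard_form r \<and> (\<forall>p q s. gcybe_coord c r p q s = 0)"

definition lscale :: "'k::field \<Rightarrow> ('i \<Rightarrow> 'k fls) \<Rightarrow> ('i \<Rightarrow> 'k fls)" where
  "lscale a v = (\<lambda>i. fls_const a * v i)"

text \<open>g(r) = span_k of the s_{k,i}(z), where s_{k,i} = sum_j (coeff of y^k in r j i) b_j\<close>
definition g_of :: "('i \<Rightarrow> 'i \<Rightarrow> 'k::field fls fps) \<Rightarrow> ('i \<Rightarrow> 'k fls) set" where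
  "g_of r = module.span lscale {(\<lambda>j. fps_nth (r j i) k) | i k. True}"

definition g_power_series :: "('i \<Rightarrow> 'k::field fls) set" where
  "g_power_series = {f. \<forall>j m. m < 0 \<longrightarrow> fls_nth (f j) m = 0}"

definition lie_subalgebra_loop :: "('i::finite \<Rightarrow> 'i \<Rightarrow> 'i \<Rightarrow> 'k::field) \<Rightarrow> ('i \<Rightarrow> 'k fls) set \<Rightarrow> bool" where
  "lie_subalgebra_loop c W \<longleftrightarrow>
     module.subspace lscale W \<and>
     (\<forall>u\<in>W. \<forall>v\<in>W. lie_br (\<lambda>i j p. fls_const (c i j p)) u v \<in> W)"

definition complementary_to_power_series :: "('i \<Rightarrow> 'k::field fls) set \<Rightarrow> bool" where
  "complementary_to_power_series W \<longleftrightarrow>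
     g_power_series \<inter> W = {0} \<and> (\<forall>f. \<exists>u\<in>g_power_series. \<exists>w\<in>W. f = u + w)"

end

theory Submission
  imports Defs
begin

unbundle fps_syntax


lemma jac_ident:
  fixes c :: "'i::finite \<Rightarrow> 'i \<Rightarrow> 'i \<Rightarrow> 'k::field"
  assumes L: "is_lie_algebra_sc c"
  shows "(\<Sum>p\<in>UNIV. c i j p * c p m l) = (\<Sum>p\<in>UNIV. c j m p * c i p l + c m i p * c j p l)"
proof -
  have as: "\<And>a b d. c a b d = - c b a d" using L unfolding is_lie_algebra_sc_def by blast
  have J: "(\<Sum>p\<in>UNIV. c i j p * c m p l + c j m p * c i p l + c m i p * c j p l) = 0"
    using L unfolding is_lie_algebra_sc_def by blast
  have "(\<Sum>p\<in>UNIV. c i j p * c p m l) = - (\<Sum>p\<in>UNIV. c i j p * c m p l)"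
    by (subst as) (simp add: sum_negf)
  also have "\<dots> = (\<Sum>p\<in>UNIV. c j m p * c i p l + c m i p * c j p l)"
    using J by (simp add: sum.distrib add_eq_0_iff add.assoc)
  finally show ?thesis .
qed

lemma sum3_rot:
  "(\<Sum>p\<in>A. \<Sum>l\<in>B. \<Sum>m\<in>C. F p l m) = (\<Sum>l\<in>B. \<Sum>m\<in>C. \<Sum>p\<in>A. F p l m)"
proof -
  have "(\<Sum>p\<in>A. \<Sum>l\<in>B. \<Sum>m\<in>C. F p l m) = (\<Sum>l\<in>B. \<Sum>p\<in>A. \<Sum>m\<in>C. F p l m)"
    by (rule sum.swap)
  also have "\<dots> = (\<Sum>l\<in>B. \<Sum>m\<in>C. \<Sum>p\<in>A. F p l m)"
    by (rule sum.cong[OF refl], rule sum.swap)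
  finally show ?thesis .
qed

lemma sum3_swap23:
  "(\<Sum>l\<in>A. \<Sum>m\<in>B. \<Sum>p\<in>C. F l m p) = (\<Sum>l\<in>A. \<Sum>p\<in>C. \<Sum>m\<in>B. F l m p)"
  by (rule sum.cong[OF refl], rule sum.swap)

lemma cyclic_sc:
  fixes c :: "'i::finite \<Rightarrow> 'i \<Rightarrow> 'i \<Rightarrow> 'k::field"
  assumes L: "is_lie_algebra_sc c"
    and K: "\<forall>i j. killing_sc c i j = (if i = j then 1 else 0)"
  shows "c i j k = c j k i"
proof -
  have as: "\<And>a b d. c a b d = - c b a d" using L unfolding is_lie_algebra_sc_def by blast
  have "c i j k = (\<Sum>p\<in>UNIV. c i j p * killing_sc c p k)"
    by (simp add: K[rule_format] if_distrib cong: if_cong)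
  also have "\<dots> = (\<Sum>p\<in>UNIV. \<Sum>l\<in>UNIV. \<Sum>m\<in>UNIV. c k l m * (c i j p * c p m l))"
    unfolding killing_sc_def by (simp add: sum_distrib_left mult_ac)
  also have "\<dots> = (\<Sum>l\<in>UNIV. \<Sum>m\<in>UNIV. c k l m * (\<Sum>p\<in>UNIV. c i j p * c p m l))"
    by (subst sum3_rot) (simp add: sum_distrib_left)
  also have "\<dots> = (\<Sum>l\<in>UNIV. \<Sum>m\<in>UNIV. \<Sum>p\<in>UNIV. c k l m * c j m p * c i p l)
         + (\<Sum>l\<in>UNIV. \<Sum>m\<in>UNIV. \<Sum>p\<in>UNIV. c k l m * c m i p * c j p l)"
    by (simp only: jac_ident[OF L]) (simp add: sum_distrib_left sum.distrib distrib_left mult_ac)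
  finally have A: "c i j k = (\<Sum>l\<in>UNIV. \<Sum>m\<in>UNIV. \<Sum>p\<in>UNIV. c k l m * c j m p * c i p l)
         + (\<Sum>l\<in>UNIV. \<Sum>m\<in>UNIV. \<Sum>p\<in>UNIV. c k l m * c m i p * c j p l)" .
  have "c j k i = (\<Sum>p\<in>UNIV. c j k p * killing_sc c i p)"
    by (simp add: K[rule_format] if_distrib cong: if_cong)
  also have "\<dots> = (\<Sum>p\<in>UNIV. \<Sum>l\<in>UNIV. \<Sum>m\<in>UNIV. c i m l * (c j k p * c p l m))"
    unfolding killing_sc_def by (simp add: sum_distrib_left mult_ac)
  also have "\<dots> = (\<Sum>l\<in>UNIV. \<Sum>m\<in>UNIV. c i m l * (\<Sum>p\<in>UNIV. c j k p * c p l m))"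
    by (subst sum3_rot) (simp add: sum_distrib_left)
  also have "\<dots> = (\<Sum>l\<in>UNIV. \<Sum>m\<in>UNIV. \<Sum>p\<in>UNIV. c i m l * c k l p * c j p m)
         + (\<Sum>l\<in>UNIV. \<Sum>m\<in>UNIV. \<Sum>p\<in>UNIV. c i m l * c l j p * c k p m)"
    by (simp only: jac_ident[OF L]) (simp add: sum_distrib_left sum.distrib distrib_left mult_ac)
  finally have B: "c j k i = (\<Sum>l\<in>UNIV. \<Sum>m\<in>UNIV. \<Sum>p\<in>UNIV. c i m l * c k l p * c j p m)
         + (\<Sum>l\<in>UNIV. \<Sum>m\<in>UNIV. \<Sum>p\<in>UNIV. c i m l * c l j p * c k p m)" .
  have e1: "(\<Sum>l\<in>UNIV. \<Sum>m\<in>UNIV. \<Sum>p\<in>UNIV. c i m l * c k l p * c j p m)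
     = (\<Sum>l\<in>UNIV. \<Sum>m\<in>UNIV. \<Sum>p\<in>UNIV. c k l m * c j m p * c i p l)"
    by (subst sum3_swap23) (simp add: mult_ac)
  have e2: "(\<Sum>l\<in>UNIV. \<Sum>m\<in>UNIV. \<Sum>p\<in>UNIV. c i m l * c l j p * c k p m)
     = (\<Sum>l\<in>UNIV. \<Sum>m\<in>UNIV. \<Sum>p\<in>UNIV. c k l m * c m i p * c j p l)"
  proof -
    have "(\<Sum>l\<in>UNIV. \<Sum>m\<in>UNIV. \<Sum>p\<in>UNIV. c k l m * c m i p * c j p l)
       = (\<Sum>l\<in>UNIV. \<Sum>m\<in>UNIV. \<Sum>p\<in>UNIV. c k l m * c i m p * c p j l)"
      by (intro sum.cong refl) (metis as mult_minus_left mult_minus_right minus_minus)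
    also have "\<dots> = (\<Sum>l\<in>UNIV. \<Sum>p\<in>UNIV. \<Sum>m\<in>UNIV. c k l m * c i m p * c p j l)"
      by (rule sum3_swap23)
    also have "\<dots> = (\<Sum>p\<in>UNIV. \<Sum>l\<in>UNIV. \<Sum>m\<in>UNIV. c k l m * c i m p * c p j l)"
      by (rule sum.swap)
    also have "\<dots> = (\<Sum>p\<in>UNIV. \<Sum>m\<in>UNIV. \<Sum>l\<in>UNIV. c k l m * c i m p * c p j l)"
      by (rule sum3_swap23)
    also have "\<dots> = (\<Sum>l\<in>UNIV. \<Sum>m\<in>UNIV. \<Sum>p\<in>UNIV. c i m l * c l j p * c k p m)"
      by (simp add: mult_ac)
    finally show ?thesis by simp
  qed
  show ?thesis using A B e1 e2 by simp
qed



interpretation lsm: module "lscale :: 'k::field \<Rightarrow> ('i \<Rightarrow> 'k fls) \<Rightarrow> ('i \<Rightarrow> 'k fls)"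
  by unfold_locales
    (simp_all add: lscale_def fun_eq_iff algebra_simps fls_plus_const[symmetric] mult.assoc[symmetric])

lemma sum_fun_apply: "(sum f A) x = (\<Sum>a\<in>A. f a x)"
  by (induct A rule: infinite_finite_induct) auto

lemma lscale_nth [simp]: "lscale a v j $$ m = a * v j $$ m"
  by (simp add: lscale_def)

definition col :: "('i \<Rightarrow> 'i \<Rightarrow> 'k::field fls fps) \<Rightarrow> nat \<Rightarrow> 'i \<Rightarrow> ('i \<Rightarrow> 'k fls)" where
  "col r k i = (\<lambda>j. r j i $ k)"

definition gens :: "('i \<Rightarrow> 'i \<Rightarrow> 'k::field fls fps) \<Rightarrow> ('i \<Rightarrow> 'k fls) set" where
  "gens r = {col r k i | i k. True}"

lemma g_of_span: "g_of r = lsm.span (gens r)"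
  unfolding g_of_def gens_def col_def by simp

lemma col_in_g_of: "col r k i \<in> g_of r"
  unfolding g_of_span gens_def by (rule lsm.span_base) blast

definition LC :: "('i::finite \<Rightarrow> 'i \<Rightarrow> 'k::field fls fps) \<Rightarrow> nat \<Rightarrow> (nat \<Rightarrow> 'i \<Rightarrow> 'k) \<Rightarrow> ('i \<Rightarrow> 'k fls)" where
  "LC r N a = (\<Sum>k<N. \<Sum>i\<in>UNIV. lscale (a k i) (col r k i))"

lemma LC_in_g_of: "LC r N a \<in> g_of r"
  unfolding LC_def g_of_span by (intro lsm.span_sum lsm.span_scale lsm.span_base) (auto simp: gens_def)

lemma LC_pad:
  assumes "N \<le> M"
  shows "LC r N a = LC r M (\<lambda>k i. if k < N then a k i else 0)"
proof -
  have "LC r M (\<lambda>k i. if k < N then a k i else 0)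
      = (\<Sum>k<N. \<Sum>i\<in>UNIV. lscale (if k < N then a k i else 0) (col r k i))"
    unfolding LC_def using assms by (intro sum.mono_neutral_right) auto
  also have "\<dots> = LC r N a" unfolding LC_def by (intro sum.cong refl) auto
  finally show ?thesis by simp
qed

lemma LC_add: "LC r N a + LC r N b = LC r N (\<lambda>k i. a k i + b k i)"
  unfolding LC_def by (simp add: sum.distrib[symmetric] lsm.scale_left_distrib)

lemma lscale_zero_left [simp]: "lscale 0 v = 0"
  by (simp add: lscale_def fun_eq_iff)

lemma lscale_if: "lscale (if P then a else 0) v = (if P then lscale a v else 0)"
  by simp

lemma LC_single: "lscale c (col r k0 i0) = LC r (Suc k0) (\<lambda>k i. if k = k0 then if i = i0 then c else 0 else 0)"
proof -
  have "LC r (Suc k0) (\<lambda>k i. if k = k0 then if i = i0 then c else 0 else 0)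
     = (\<Sum>k<Suc k0. if k = k0 then (\<Sum>i\<in>UNIV. if i = i0 then lscale c (col r k i) else 0) else 0)"
    unfolding LC_def by (intro sum.cong refl) (simp add: lscale_if)
  also have "\<dots> = lscale c (col r k0 i0)" by simp
  finally show ?thesis by simp
qed

lemma span_LC:
  assumes "v \<in> g_of r"
  shows "\<exists>N a. v = LC r N a"
  using assms unfolding g_of_span
proof (induct rule: lsm.span_induct_alt)
  case base
  show ?case by (rule exI[of _ 0]) (simp add: LC_def)
next
  case (step c x y)
  from step(1) obtain k0 i0 where x: "x = col r k0 i0" unfolding gens_def by blast
  from step(2) obtain N a where y: "y = LC r N a" by blast
  define M where "M = max N (Suc k0)"
  have "lscale c x + y = LC r M (\<lambda>k i. if k < Suc k0 then (if k = k0 then if i = i0 then c else 0 else 0) else 0)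
      + LC r M (\<lambda>k i. if k < N then a k i else 0)"
    unfolding x y M_def by (simp add: LC_single LC_pad[symmetric])
  then show ?case by (auto simp: LC_add)
qed

definition std :: "('i \<Rightarrow> 'i \<Rightarrow> 'k::field fls fps) \<Rightarrow> ('i \<Rightarrow> 'i \<Rightarrow> 'k fps fps) \<Rightarrow> bool" where
  "std r r0 \<longleftrightarrow> (\<forall>i j. r i j = gamma_kernel i j + embed2 (r0 i j))"

lemma nsf_std: "normalized_standard_form r \<longleftrightarrow> (\<exists>r0. std r r0)"
  unfolding normalized_standard_form_def std_def by simp

lemma X_intpow_nth [simp]: "(fls_X_intpow a :: 'k::field fls) $$ m = (if m = a then 1 else 0)"
  by simp

lemma embed2_nth [simp]: "embed2 f $ k = fps_to_fls (f $ k)"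
  by (simp add: embed2_def)

lemma gamma_nth: "gamma_kernel j i $ k $$ m = (if j = i \<and> m = - int k - 1 then (1::'k::field) else 0)"
  by (simp add: gamma_kernel_def cauchy_kernel_def)

lemma std_nth:
  assumes "std r r0"
  shows "r j i $ k $$ m = (if j = i \<and> m = - int k - 1 then 1 else 0) + (if m < 0 then 0 else r0 j i $ k $ nat m)"
  using assms unfolding std_def by (simp add: gamma_nth)

lemma std_nth_neg:
  assumes "std r r0" "m < 0"
  shows "r j i $ k $$ m = (if j = i \<and> m = - int k - 1 then 1 else 0)"
  using std_nth[OF assms(1)] assms(2) by simp

lemma col_nth: "col r k i j = r j i $ k"
  by (simp add: col_def)

lemma LC_nth: "LC r N a j $$ m = (\<Sum>k<N. \<Sum>i\<in>UNIV. a k i * r j i $ k $$ m)"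
  unfolding LC_def by (simp add: sum_fun_apply fls_nth_sum col_nth)

lemma LC_neg:
  assumes "std r r0" "m < 0"
  shows "LC r N a j $$ m = (if nat (- m - 1) < N then a (nat (- m - 1)) j else 0)"
proof -
  have "LC r N a j $$ m = (\<Sum>k<N. if k = nat (- m - 1) then a k j else 0)"
    unfolding LC_nth
  proof (intro sum.cong refl)
    fix k assume "k \<in> {..<N}"
    have e: "(m = - int k - 1) = (k = nat (- m - 1))" using assms(2) by auto
    show "(\<Sum>i\<in>UNIV. a k i * r j i $ k $$ m) = (if k = nat (- m - 1) then a k j else 0)"
      by (simp add: std_nth_neg[OF assms] e if_distrib[of "\<lambda>x. a _ _ * x"] cong: if_cong)
  qed
  also have "\<dots> = (if nat (- m - 1) < N then a (nat (- m - 1)) j else 0)" by simp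
  finally show ?thesis .
qed

lemma PS_iff: "v \<in> g_power_series \<longleftrightarrow> (\<forall>j m. m < 0 \<longrightarrow> v j $$ m = 0)"
  by (simp add: g_power_series_def)

lemma zero_in_PS: "0 \<in> g_power_series"
  by (simp add: PS_iff)

lemma LC_PS_zero:
  assumes "std r r0" "LC r N a \<in> g_power_series"
  shows "LC r N a = 0"
proof -
  have "\<And>k j. k < N \<Longrightarrow> a k j = 0"
  proof -
    fix k j assume k: "k < N"
    have "LC r N a j $$ (- int k - 1) = 0" using assms(2) by (simp add: PS_iff)
    then show "a k j = 0" using LC_neg[OF assms(1), of "- int k - 1" N a j] k by simp
  qed
  then show ?thesis unfolding LC_def by simp
qed

lemma g_of_PS:
  fixes r :: "'i::finite \<Rightarrow> 'i \<Rightarrow> 'k::field fls fps"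
  assumes "std r r0" "v \<in> g_of r" "v \<in> g_power_series"
  shows "v = 0"
  using span_LC[OF assms(2)] LC_PS_zero[OF assms(1)] assms(3) by blast

lemma decomp:
  fixes r :: "'i::finite \<Rightarrow> 'i \<Rightarrow> 'k::field fls fps"
  assumes "std r r0"
  shows "\<exists>u\<in>g_power_series. \<exists>w\<in>g_of r. f = u + w"
proof -
  define N where "N = (\<Sum>j\<in>UNIV. nat (- fls_subdegree (f j)))"
  define a where "a = (\<lambda>k i. f i $$ (- int k - 1))"
  have bound: "\<And>j m. m < - int N \<Longrightarrow> f j $$ m = 0"
  proof -
    fix j m assume m: "m < - int N"
    have "nat (- fls_subdegree (f j)) \<le> N"
      unfolding N_def by (rule member_le_sum) auto
    then have "m < fls_subdegree (f j)" using m by linarith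
    then show "f j $$ m = 0" by simp
  qed
  have "f - LC r N a \<in> g_power_series"
    unfolding PS_iff
  proof (intro allI impI)
    fix j :: 'i and m :: int
    assume m: "m < 0"
    show "(f - LC r N a) j $$ m = 0"
    proof (cases "nat (- m - 1) < N")
      case True
      then show ?thesis using m by (simp add: LC_neg[OF assms m] a_def)
    next
      case False
      then have "m < - int N" using m by linarith
      then show ?thesis using m by (simp add: LC_neg[OF assms m] bound)
    qed
  qed
  moreover have "f = (f - LC r N a) + LC r N a" by simp
  ultimately show ?thesis using LC_in_g_of by blast
qed

lemma compl:
  fixes r :: "'i::finite \<Rightarrow> 'i \<Rightarrow> 'k::field fls fps"
  assumes "std r r0"
  shows "complementary_to_power_series (g_of r)"
  unfolding complementary_to_power_series_def
proof (intro conjI allI)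
  show "g_power_series \<inter> g_of r = {0}"
    using g_of_PS[OF assms] zero_in_PS lsm.span_zero[of "gens r", folded g_of_span] by blast
  show "\<exists>u\<in>g_power_series. \<exists>w\<in>g_of r. f = u + w" for f
    by (rule decomp[OF assms])
qed

lemma inj_std:
  fixes r :: "'i::finite \<Rightarrow> 'i \<Rightarrow> 'k::field fls fps"
  assumes "std r r0" "std r' r0'" "g_of r = g_of r'"
  shows "r = r'"
proof -
  have "\<And>k i. col r k i = col r' k i"
  proof -
    fix k i
    have "col r k i - col r' k i \<in> g_of r"
      using col_in_g_of[of r k i] col_in_g_of[of r' k i] assms(3)
      unfolding g_of_span by (intro lsm.span_diff) auto
    moreover have "col r k i - col r' k i \<in> g_power_series"
      unfolding PS_iff using std_nth_neg[OF assms(1)] std_nth_neg[OF assms(2)] by (simp add: col_nth)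
    ultimately have "col r k i - col r' k i = 0" using g_of_PS[OF assms(1)] by blast
    then show "col r k i = col r' k i" by simp
  qed
  then have "\<And>j i k. r j i $ k = r' j i $ k" by (metis col_nth)
  then show ?thesis by (intro ext fps_ext)
qed



lemma fls_mult_nth_bounds:
  fixes f g :: "'a::comm_ring_1 fls"
  assumes fa: "\<And>t. t < a \<Longrightarrow> f $$ t = 0" and gb: "\<And>t. t < b \<Longrightarrow> g $$ t = 0"
  shows "(f * g) $$ n = (\<Sum>i\<in>{a..n-b}. f $$ i * g $$ (n - i))"
proof (cases "f = 0 \<or> g = 0")
  case True
  then show ?thesis by auto
next
  case False
  then have fz: "f \<noteq> 0" and gz: "g \<noteq> 0" by auto
  have da: "a \<le> fls_subdegree f" using fls_subdegree_geI[OF fz] fa by blast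
  have db: "b \<le> fls_subdegree g" using fls_subdegree_geI[OF gz] gb by blast
  have "(f * g) $$ n = (\<Sum>i\<in>{fls_subdegree f..n - fls_subdegree g}. f $$ i * g $$ (n - i))"
    by (rule fls_times_nth(2))
  also have "\<dots> = (\<Sum>i\<in>{a..n-b}. f $$ i * g $$ (n - i))"
  proof (rule sum.mono_neutral_left)
    show "finite {a..n - b}" by simp
    show "{fls_subdegree f..n - fls_subdegree g} \<subseteq> {a..n - b}" using da db by auto
    show "\<forall>i\<in>{a..n - b} - {fls_subdegree f..n - fls_subdegree g}. f $$ i * g $$ (n - i) = 0"
    proof
      fix i assume "i \<in> {a..n - b} - {fls_subdegree f..n - fls_subdegree g}"
      then have "i < fls_subdegree f \<or> n - i < fls_subdegree g" by auto
      then show "f $$ i * g $$ (n - i) = 0" by auto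
    qed
  qed
  finally show ?thesis .
qed

lemma fls_lift_nth [simp]: "fls_lift f $$ m = fls_const (f $$ m)"
proof -
  obtain N where "\<forall>n<N. f $$ n = 0" by (rule fls_nth_vanishes_belowE)
  then have "\<forall>n<N. fls_const (f $$ n) = 0" by simp
  then show ?thesis unfolding fls_lift_def by (rule nth_Abs_fls_lower_bound)
qed

lemma K3_mult_nth: "(K3 x * F) $ l $$ k = fls_const x * (F $ l $$ k)"
  by (simp add: K3_def)

lemma E12: "(sub12 A * sub13 B) $ l $$ k = (if k < 0 then 0 else A $ nat k * B $ l)"
  by (simp add: sub12_def sub13_def)

lemma E23:
  assumes "\<And>t. t < - int l - 1 \<Longrightarrow> B $ l $$ t = 0"
  shows "(sub12 A * sub23 B) $ l $$ k
     = (\<Sum>m\<in>{0..k + int l + 1}. A $ nat m * fls_const (B $ l $$ (k - m)))"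
proof -
  have "(sub12 A * sub23 B) $ l = fps_to_fls A * fls_lift (B $ l)"
    by (simp add: sub12_def sub23_def)
  also have "\<dots> $$ k = (\<Sum>i\<in>{0..k - (- int l - 1)}. fps_to_fls A $$ i * fls_lift (B $ l) $$ (k - i))"
    by (rule fls_mult_nth_bounds) (auto simp: assms)
  also have "\<dots> = (\<Sum>m\<in>{0..k + int l + 1}. A $ nat m * fls_const (B $ l $$ (k - m)))"
    by (intro sum.cong) auto
  finally show ?thesis .
qed

lemma E13:
  "(sub13 A * sub23 B) $ l $$ k = (\<Sum>a=0..l. A $ a * fls_const (B $ (l - a) $$ k))"
  by (simp add: sub13_def sub23_def fps_mult_nth fls_nth_sum)

lemma std_low:
  assumes "std r r0" "t < - int l - 1"
  shows "r a b $ l $$ t = 0"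
  using std_nth_neg[OF assms(1), of t] assms(2) by simp

definition T1v :: "('i::finite \<Rightarrow> 'i \<Rightarrow> 'i \<Rightarrow> 'k::field) \<Rightarrow> ('i \<Rightarrow> 'i \<Rightarrow> 'k fls fps) \<Rightarrow> 'i \<Rightarrow> 'i \<Rightarrow> nat \<Rightarrow> int \<Rightarrow> 'i \<Rightarrow> 'k fls" where
  "T1v c r q s l k = (\<lambda>p. \<Sum>i\<in>UNIV. \<Sum>k'\<in>UNIV. fls_const (c i k' p) * (if k < 0 then 0 else r i q $ nat k * r k' s $ l))"

definition T2v :: "('i::finite \<Rightarrow> 'i \<Rightarrow> 'i \<Rightarrow> 'k::field) \<Rightarrow> ('i \<Rightarrow> 'i \<Rightarrow> 'k fls fps) \<Rightarrow> 'i \<Rightarrow> 'i \<Rightarrow> nat \<Rightarrow> int \<Rightarrow> 'i \<Rightarrow> 'k fls" where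
  "T2v c r q s l k = (\<lambda>p. \<Sum>j\<in>UNIV. \<Sum>k'\<in>UNIV. fls_const (c j k' q) *
      (\<Sum>m\<in>{0..k + int l + 1}. r p j $ nat m * fls_const (r k' s $ l $$ (k - m))))"

definition T3v :: "('i::finite \<Rightarrow> 'i \<Rightarrow> 'i \<Rightarrow> 'k::field) \<Rightarrow> ('i \<Rightarrow> 'i \<Rightarrow> 'k fls fps) \<Rightarrow> 'i \<Rightarrow> 'i \<Rightarrow> nat \<Rightarrow> int \<Rightarrow> 'i \<Rightarrow> 'k fls" where
  "T3v c r q s l k = (\<lambda>p. \<Sum>j\<in>UNIV. \<Sum>l'\<in>UNIV. fls_const (c j l' s) *
      (\<Sum>a=0..l. r p j $ a * fls_const (rbar r q l' $ (l - a) $$ k)))"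

lemma gcybe_nth:
  assumes "std r r0"
  shows "gcybe_coord c r p q s $ l $$ k = T1v c r q s l k p + T2v c r q s l k p + T3v c r q s l k p"
  unfolding gcybe_coord_def T1v_def T2v_def T3v_def
  by (simp add: fps_sum_nth fls_nth_sum mult.assoc K3_mult_nth E12 E23[OF std_low[OF assms]] E13)

lemma T2v_in:
  fixes r :: "'i::finite \<Rightarrow> 'i \<Rightarrow> 'k::field fls fps"
  shows "T2v c r q s l k \<in> g_of r"
proof -
  have "T2v c r q s l k = (\<Sum>j\<in>UNIV. \<Sum>k'\<in>UNIV. \<Sum>m\<in>{0..k + int l + 1}.
           lscale (c j k' q * r k' s $ l $$ (k - m)) (col r (nat m) j))"
    unfolding T2v_def
    by (rule ext) (simp add: sum_fun_apply lscale_def col_nth sum_distrib_left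
        fls_const_mult_const[symmetric] mult_ac del: fls_const_mult_const)
  also have "\<dots> \<in> g_of r"
    unfolding g_of_span
    by (intro lsm.span_sum lsm.span_scale lsm.span_base) (auto simp: gens_def)
  finally show ?thesis .
qed

lemma T3v_in:
  fixes r :: "'i::finite \<Rightarrow> 'i \<Rightarrow> 'k::field fls fps"
  shows "T3v c r q s l k \<in> g_of r"
proof -
  have "T3v c r q s l k = (\<Sum>j\<in>UNIV. \<Sum>l'\<in>UNIV. \<Sum>a=0..l.
           lscale (c j l' s * rbar r q l' $ (l - a) $$ k) (col r a j))"
    unfolding T3v_def
    by (rule ext) (simp add: sum_fun_apply lscale_def col_nth sum_distrib_left
        fls_const_mult_const[symmetric] mult_ac del: fls_const_mult_const)
  also have "\<dots> \<in> g_of r"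
    unfolding g_of_span
    by (intro lsm.span_sum lsm.span_scale lsm.span_base) (auto simp: gens_def)
  finally show ?thesis .
qed

lemma T1v_lie:
  "T1v c r q s l k = (if k < 0 then 0 else lie_br (\<lambda>i j p. fls_const (c i j p)) (col r (nat k) q) (col r l s))"
  unfolding T1v_def lie_br_def by (rule ext) (simp add: col_nth mult_ac)



lemma collapse_int:
  assumes "std r r0" "n < 0"
  shows "(\<Sum>m\<in>{0..K}. r p j $ nat m $$ n * Y m) = (if p = j \<and> - n - 1 \<le> K then Y (- n - 1) else 0)"
proof -
  have "(\<Sum>m\<in>{0..K}. r p j $ nat m $$ n * Y m) = (\<Sum>m\<in>{0..K}. if m = - n - 1 then (if p = j then Y m else 0) else 0)"
  proof (intro sum.cong refl)
    fix m assume "m \<in> {0..K}"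
    then have "m \<ge> 0" by simp
    then have e: "(n = - int (nat m) - 1) = (m = - n - 1)" by auto
    show "r p j $ nat m $$ n * Y m = (if m = - n - 1 then (if p = j then Y m else 0) else 0)"
      using \<open>m \<ge> 0\<close> by (simp add: std_nth_neg[OF assms] e)
  qed
  also have "\<dots> = (if p = j \<and> - n - 1 \<le> K then Y (- n - 1) else 0)"
    using assms(2) by simp
  finally show ?thesis .
qed

lemma collapse_nat:
  assumes "std r r0" "n < 0"
  shows "(\<Sum>a=0..l. r p j $ a $$ n * Z a) = (if p = j \<and> nat (- n - 1) \<le> l then Z (nat (- n - 1)) else 0)"
proof -
  have "(\<Sum>a=0..l. r p j $ a $$ n * Z a) = (\<Sum>a=0..l. if a = nat (- n - 1) then (if p = j then Z a else 0) else 0)"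
  proof (intro sum.cong refl)
    fix a assume "a \<in> {0..l}"
    have e: "(n = - int a - 1) = (a = nat (- n - 1))" using assms(2) by auto
    show "r p j $ a $$ n * Z a = (if a = nat (- n - 1) then (if p = j then Z a else 0) else 0)"
      by (simp add: std_nth_neg[OF assms] e)
  qed
  also have "\<dots> = (if p = j \<and> nat (- n - 1) \<le> l then Z (nat (- n - 1)) else 0)"
    by simp
  finally show ?thesis .
qed

lemma dsum2:
  "(\<Sum>j\<in>(UNIV::'i::finite set). \<Sum>k\<in>A. if p = j \<and> P then f j k else 0) = (\<Sum>k\<in>A. if P then f p k else 0)"
proof -
  have "(\<Sum>j\<in>(UNIV::'i::finite set). \<Sum>k\<in>A. if p = j \<and> P then f j k else 0)
     = (\<Sum>j\<in>(UNIV::'i::finite set). if p = j then (\<Sum>k\<in>A. if P then f j k else 0) else 0)"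
    by (intro sum.cong refl) auto
  also have "\<dots> = (\<Sum>k\<in>A. if P then f p k else 0)" by simp
  finally show ?thesis .
qed

lemma C2:
  assumes "std r r0" "n < 0"
  shows "T2v c r q s l k p $$ n = (\<Sum>k'\<in>UNIV. c p k' q * r k' s $ l $$ (k + n + 1))"
proof -
  have "T2v c r q s l k p $$ n = (\<Sum>j\<in>UNIV. \<Sum>k'\<in>UNIV. c j k' q *
      (\<Sum>m\<in>{0..k + int l + 1}. r p j $ nat m $$ n * (r k' s $ l $$ (k - m))))"
    unfolding T2v_def by (simp add: fls_nth_sum)
  also have "\<dots> = (\<Sum>j\<in>UNIV. \<Sum>k'\<in>UNIV. c j k' q *
      (if p = j \<and> - n - 1 \<le> k + int l + 1 then r k' s $ l $$ (k + n + 1) else 0))"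
    by (simp add: collapse_int[OF assms] algebra_simps cong: if_cong)
  also have "\<dots> = (\<Sum>k'\<in>UNIV. c p k' q *
      (if - n - 1 \<le> k + int l + 1 then r k' s $ l $$ (k + n + 1) else 0))"
    by (simp add: if_distrib[of "\<lambda>x. _ * x"] dsum2 cong: if_cong)
  also have "\<dots> = (\<Sum>k'\<in>UNIV. c p k' q * r k' s $ l $$ (k + n + 1))"
    using std_low[OF assms(1)] by (intro sum.cong refl) auto
  finally show ?thesis .
qed

lemma reg_std:
  assumes "std r r0"
  shows "reg_part2 (r a b) = r0 a b"
proof (intro fps_ext)
  fix t u
  show "reg_part2 (r a b) $ t $ u = r0 a b $ t $ u"
    by (simp add: reg_part2_def std_nth[OF assms])
qed

lemma rbar_nth:
  assumes "std r r0"
  shows "rbar r q l' $ b $$ k = (if q = l' \<and> k = - int b - 1 then 1 else 0) - (if k < 0 then 0 else r0 l' q $ nat k $ b)"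
  by (simp add: rbar_def gamma_nth reg_std[OF assms] swap2_def)

lemma C3:
  assumes "std r r0" "n < 0"
  shows "T3v c r q s l k p $$ n = (if nat (- n - 1) \<le> l then (\<Sum>l'\<in>UNIV. c p l' s * rbar r q l' $ (l - nat (- n - 1)) $$ k) else 0)"
proof -
  have "T3v c r q s l k p $$ n = (\<Sum>j\<in>UNIV. \<Sum>l'\<in>UNIV. c j l' s *
      (\<Sum>a=0..l. r p j $ a $$ n * rbar r q l' $ (l - a) $$ k))"
    unfolding T3v_def by (simp add: fls_nth_sum)
  also have "\<dots> = (\<Sum>j\<in>UNIV. \<Sum>l'\<in>UNIV. c j l' s *
      (if p = j \<and> nat (- n - 1) \<le> l then rbar r q l' $ (l - nat (- n - 1)) $$ k else 0))"
    by (simp add: collapse_nat[OF assms] cong: if_cong)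
  also have "\<dots> = (\<Sum>l'\<in>UNIV. if nat (- n - 1) \<le> l then c p l' s * rbar r q l' $ (l - nat (- n - 1)) $$ k else 0)"
    by (simp add: if_distrib[of "\<lambda>x. _ * x"] dsum2 cong: if_cong)
  also have "\<dots> = (if nat (- n - 1) \<le> l then (\<Sum>l'\<in>UNIV. c p l' s * rbar r q l' $ (l - nat (- n - 1)) $$ k) else 0)"
    by simp
  finally show ?thesis .
qed

lemma shift1_times:
  fixes f :: "'a::semiring_1 fls"
  shows "fls_shift a 1 * f = fls_shift a f" "f * fls_shift a 1 = fls_shift a f"
  using fls_X_intpow_times_conv_shift[where i="-a" and f=f] by simp_all

lemma prod_nth:
  assumes "std r r0" "n < 0"
  shows "(r i q $ k0 * r k' s $ l) $$ n = (if i = q then r k' s $ l $$ (n + int k0 + 1) else 0)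
      + (if k' = s then (if n + int l + 1 < 0 then 0 else r0 i q $ k0 $ nat (n + int l + 1)) else 0)"
proof -
  have r1: "r i q $ k0 = (if i = q then fls_X_intpow (- int k0 - 1) else 0) + fps_to_fls (r0 i q $ k0)"
    using assms(1) unfolding std_def by (simp add: gamma_kernel_def cauchy_kernel_def)
  have r2: "r k' s $ l = (if k' = s then fls_X_intpow (- int l - 1) else 0) + fps_to_fls (r0 k' s $ l)"
    using assms(1) unfolding std_def by (simp add: gamma_kernel_def cauchy_kernel_def)
  define Y where "Y = r k' s $ l"
  have "(r i q $ k0 * Y) $$ n = ((if i = q then fls_X_intpow (- int k0 - 1) else 0) * Y) $$ n
       + (fps_to_fls (r0 i q $ k0) * (if k' = s then fls_X_intpow (- int l - 1) else 0)) $$ n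
       + (fps_to_fls (r0 i q $ k0) * fps_to_fls (r0 k' s $ l)) $$ n"
    unfolding r1 by (simp add: Y_def r2 distrib_left distrib_right)
  also have "(fps_to_fls (r0 i q $ k0) * fps_to_fls (r0 k' s $ l)) $$ n = 0"
    using assms(2) by (simp add: fls_times_fps_to_fls[symmetric])
  also have "((if i = q then fls_X_intpow (- int k0 - 1) else 0) * Y) $$ n
      = (if i = q then Y $$ (n + int k0 + 1) else 0)"
    by (simp add: shift1_times algebra_simps)
  also have "(fps_to_fls (r0 i q $ k0) * (if k' = s then fls_X_intpow (- int l - 1) else 0)) $$ n
      = (if k' = s then (if n + int l + 1 < 0 then 0 else r0 i q $ k0 $ nat (n + int l + 1)) else 0)"
    by (simp add: shift1_times algebra_simps)
  finally show ?thesis by (simp add: Y_def)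
qed

lemma C1:
  assumes "std r r0" "n < 0"
  shows "T1v c r q s l (int k0) p $$ n = (\<Sum>k'\<in>UNIV. c q k' p * r k' s $ l $$ (n + int k0 + 1))
     + (\<Sum>i\<in>UNIV. c i s p * (if n + int l + 1 < 0 then 0 else r0 i q $ k0 $ nat (n + int l + 1)))"
proof -
  have "T1v c r q s l (int k0) p $$ n = (\<Sum>i\<in>UNIV. \<Sum>k'\<in>UNIV. c i k' p *
       ((if i = q then r k' s $ l $$ (n + int k0 + 1) else 0)
      + (if k' = s then (if n + int l + 1 < 0 then 0 else r0 i q $ k0 $ nat (n + int l + 1)) else 0)))"
    unfolding T1v_def by (simp add: fls_nth_sum prod_nth[OF assms])
  also have "\<dots> = (\<Sum>i\<in>UNIV. \<Sum>k'\<in>UNIV. if i = q then c i k' p * r k' s $ l $$ (n + int k0 + 1) else 0)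
      + (\<Sum>i\<in>UNIV. \<Sum>k'\<in>UNIV. if k' = s then c i k' p * (if n + int l + 1 < 0 then 0 else r0 i q $ k0 $ nat (n + int l + 1)) else 0)"
    by (simp add: distrib_left sum.distrib if_distrib[of "\<lambda>x. _ * x"] cong: if_cong)
  also have "\<dots> = (\<Sum>k'\<in>UNIV. c q k' p * r k' s $ l $$ (n + int k0 + 1))
     + (\<Sum>i\<in>UNIV. c i s p * (if n + int l + 1 < 0 then 0 else r0 i q $ k0 $ nat (n + int l + 1)))"
    by (simp add: sum.swap[of "\<lambda>i k'. if i = q then _ i k' else 0"])
  finally show ?thesis .
qed

lemma principal_zero:
  fixes c :: "'i::finite \<Rightarrow> 'i \<Rightarrow> 'i \<Rightarrow> 'k::field"
  assumes L: "is_lie_algebra_sc c"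
    and K: "\<forall>i j. killing_sc c i j = (if i = j then 1 else 0)"
    and S: "std r r0" and n: "n < 0"
  shows "(T1v c r q s l k p + T2v c r q s l k p + T3v c r q s l k p) $$ n = 0"
proof -
  have as: "\<And>a b d. c a b d = - c b a d" using L unfolding is_lie_algebra_sc_def by blast
  have cyc: "\<And>a b d. c a b d = c b d a" using cyclic_sc[OF L K] by blast
  have T2: "T2v c r q s l k p $$ n = (\<Sum>k'\<in>UNIV. c p k' q * r k' s $ l $$ (k + n + 1))"
    by (rule C2[OF S n])
  have T3: "T3v c r q s l k p $$ n = (if nat (- n - 1) \<le> l then (\<Sum>l'\<in>UNIV. c p l' s * rbar r q l' $ (l - nat (- n - 1)) $$ k) else 0)"
    by (rule C3[OF S n])
  show ?thesis
  proof (cases "k < 0")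
    case True
    have T1: "T1v c r q s l k p $$ n = 0" using True by (simp add: T1v_def)
    have R: "\<And>k'. r k' s $ l $$ (k + n + 1) = (if k' = s \<and> k + n + 1 = - int l - 1 then 1 else 0)"
      using std_nth_neg[OF S, of "k + n + 1"] True n by simp
    have T2': "T2v c r q s l k p $$ n = (if k + n + 1 = - int l - 1 then c p s q else 0)"
      unfolding T2 R by (simp add: if_distrib[of "\<lambda>x. _ * x"] cong: if_cong)
    have cond: "(nat (- n - 1) \<le> l \<and> k = - int (l - nat (- n - 1)) - 1) = (k + n + 1 = - int l - 1)"
      using True n by auto
    have T3': "T3v c r q s l k p $$ n = (if k + n + 1 = - int l - 1 then c p q s else 0)"
    proof -
      have "T3v c r q s l k p $$ n = (if nat (- n - 1) \<le> l then (\<Sum>l'\<in>UNIV. c p l' s * (if q = l' \<and> k = - int (l - nat (- n - 1)) - 1 then 1 else 0)) else 0)"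
        unfolding T3 using True by (simp add: rbar_nth[OF S])
      also have "\<dots> = (if nat (- n - 1) \<le> l \<and> k = - int (l - nat (- n - 1)) - 1 then c p q s else 0)"
        by (simp add: if_distrib[of "\<lambda>x. _ * x"] cong: if_cong)
      finally show ?thesis unfolding cond .
    qed
    have "c p s q + c p q s = 0" using as[of p s q] cyc[of s p q] by simp
    then show ?thesis using T1 T2' T3' by simp
  next
    case False
    then obtain k0 where k0: "k = int k0" by (metis nonneg_eq_int not_less)
    define G where "G = (\<lambda>i. if n + int l + 1 < 0 then 0 else r0 i q $ k0 $ nat (n + int l + 1))"
    have T1: "T1v c r q s l k p $$ n = (\<Sum>k'\<in>UNIV. c q k' p * r k' s $ l $$ (n + int k0 + 1))
       + (\<Sum>i\<in>UNIV. c i s p * G i)"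
      unfolding k0 G_def by (rule C1[OF S n])
    have sum1: "(\<Sum>k'\<in>UNIV. c q k' p * r k' s $ l $$ (n + int k0 + 1)) + T2v c r q s l k p $$ n = 0"
    proof -
      have "(\<Sum>k'\<in>UNIV. c q k' p * r k' s $ l $$ (n + int k0 + 1)) + T2v c r q s l k p $$ n
          = (\<Sum>k'\<in>UNIV. (c q k' p + c p k' q) * r k' s $ l $$ (n + int k0 + 1))"
        using T2 k0 by (simp add: sum.distrib[symmetric] distrib_right add_ac)
      also have "\<dots> = 0"
      proof (intro sum.neutral ballI)
        fix k' show "(c q k' p + c p k' q) * r k' s $ l $$ (n + int k0 + 1) = 0"
          using cyc[of q k' p] as[of k' p q] by simp
      qed
      finally show ?thesis .
    qed
    have sum2: "(\<Sum>i\<in>UNIV. c i s p * G i) + T3v c r q s l k p $$ n = 0"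
    proof (cases "n + int l + 1 < 0")
      case True
      then have "\<not> nat (- n - 1) \<le> l" using n by auto
      then show ?thesis unfolding T3 G_def using True by simp
    next
      case False
      then have le: "nat (- n - 1) \<le> l" and e: "l - nat (- n - 1) = nat (n + int l + 1)" using n by auto
      have "T3v c r q s l k p $$ n = (\<Sum>l'\<in>UNIV. c p l' s * (- r0 l' q $ k0 $ nat (n + int l + 1)))"
        using T3 e k0 le by (simp add: rbar_nth[OF S])
      also have "\<dots> = - (\<Sum>i\<in>UNIV. c i s p * G i)"
        unfolding G_def using False by (simp add: sum_negf cyc[of _ s p] cyc[of s p])
      finally show ?thesis by simp
    qed
    have "(T1v c r q s l k p + T2v c r q s l k p + T3v c r q s l k p) $$ n
      = ((\<Sum>k'\<in>UNIV. c q k' p * r k' s $ l $$ (n + int k0 + 1)) + T2v c r q s l k p $$ n)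
        + ((\<Sum>i\<in>UNIV. c i s p * G i) + T3v c r q s l k p $$ n)"
      using T1 by (simp only: fls_plus_nth) (simp add: algebra_simps)
    then show ?thesis using sum1 sum2 by simp
  qed
qed



lemma lie_br_add_left: "lie_br C (u + u') v = lie_br C u v + lie_br C u' v"
  unfolding lie_br_def by (rule ext) (simp add: distrib_right sum.distrib)

lemma lie_br_add_right: "lie_br C u (v + v') = lie_br C u v + lie_br C u v'"
  unfolding lie_br_def by (rule ext) (simp add: distrib_right distrib_left sum.distrib)

lemma lie_br_zero_left [simp]: "lie_br C 0 v = 0"
  unfolding lie_br_def by (rule ext) simp

lemma lie_br_zero_right [simp]: "lie_br C u 0 = 0"
  unfolding lie_br_def by (rule ext) simp

lemma lie_br_scale_left: "lie_br C (lscale a u) v = lscale a (lie_br C u v)"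
  unfolding lie_br_def lscale_def by (rule ext) (simp add: sum_distrib_left mult_ac)

lemma lie_br_scale_right: "lie_br C u (lscale a v) = lscale a (lie_br C u v)"
  unfolding lie_br_def lscale_def by (rule ext) (simp add: sum_distrib_left mult_ac)

lemma span_closed:
  fixes S :: "('i::finite \<Rightarrow> 'k::field fls) set"
  assumes gen: "\<And>x y. x \<in> S \<Longrightarrow> y \<in> S \<Longrightarrow> lie_br C x y \<in> lsm.span S"
    and u: "u \<in> lsm.span S" and v: "v \<in> lsm.span S"
  shows "lie_br C u v \<in> lsm.span S"
proof -
  have one: "lie_br C u' y \<in> lsm.span S" if "u' \<in> lsm.span S" "y \<in> S" for u' y
    using that(1)
  proof (induct rule: lsm.span_induct_alt)
    case base then show ?case by (metis lie_br_zero_left lsm.span_zero)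
  next
    case (step a x z)
    have "lie_br C (lscale a x + z) y = lscale a (lie_br C x y) + lie_br C z y"
      by (simp only: lie_br_add_left lie_br_scale_left)
    then show ?case using step gen that(2) by (metis lsm.span_add lsm.span_scale lsm.span_base)
  qed
  show ?thesis using v
  proof (induct rule: lsm.span_induct_alt)
    case base then show ?case by (metis lie_br_zero_right lsm.span_zero)
  next
    case (step a x z)
    have "lie_br C u (lscale a x + z) = lscale a (lie_br C u x) + lie_br C u z"
      by (simp only: lie_br_add_right lie_br_scale_right)
    then show ?case using step one u by (metis lsm.span_add lsm.span_scale)
  qed
qed

lemma gcybe_sub:
  fixes c :: "'i::finite \<Rightarrow> 'i \<Rightarrow> 'i \<Rightarrow> 'k::field"
  assumes S: "std r r0" and G: "\<forall>p q s. gcybe_coord c r p q s = 0"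
  shows "lie_subalgebra_loop c (g_of r)"
  unfolding lie_subalgebra_loop_def
proof (intro conjI ballI)
  show "lsm.subspace (g_of r)" unfolding g_of_span by simp
next
  fix u v assume u: "u \<in> g_of r" and v: "v \<in> g_of r"
  show "lie_br (\<lambda>i j p. fls_const (c i j p)) u v \<in> g_of r"
    unfolding g_of_span
  proof (rule span_closed)
    fix x y assume "x \<in> gens r" "y \<in> gens r"
    then obtain k0 q l s where x: "x = col r k0 q" and y: "y = col r l s" unfolding gens_def by blast
    have "\<And>p. T1v c r q s l (int k0) p + T2v c r q s l (int k0) p + T3v c r q s l (int k0) p = 0"
      using gcybe_nth[OF S, of c _ q s l "int k0"] G by simp
    then have h: "\<And>p. T1v c r q s l (int k0) p = - (T2v c r q s l (int k0) p + T3v c r q s l (int k0) p)"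
      unfolding eq_neg_iff_add_eq_0 by (simp add: add.assoc)
    have "T1v c r q s l (int k0) = - (T2v c r q s l (int k0) + T3v c r q s l (int k0))"
      by (rule ext) (simp add: h)
    moreover have "- (T2v c r q s l (int k0) + T3v c r q s l (int k0)) \<in> lsm.span (gens r)"
      using T2v_in T3v_in unfolding g_of_span by (intro lsm.span_neg lsm.span_add)
    ultimately show "lie_br (\<lambda>i j p. fls_const (c i j p)) x y \<in> lsm.span (gens r)"
      unfolding x y by (simp add: T1v_lie)
  qed (use u v in \<open>simp_all add: g_of_span\<close>)
qed



definition Xv :: "nat \<Rightarrow> 'i \<Rightarrow> ('i \<Rightarrow> 'k::field fls)" where
  "Xv k i = (\<lambda>j. if j = i then fls_X_intpow (- int k - 1) else 0)"

definition wW :: "('i \<Rightarrow> 'k::field fls) set \<Rightarrow> nat \<Rightarrow> 'i \<Rightarrow> ('i \<Rightarrow> 'k fls)" where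
  "wW W k i = (SOME w. w \<in> W \<and> Xv k i - w \<in> g_power_series)"

definition rW :: "('i \<Rightarrow> 'k::field fls) set \<Rightarrow> 'i \<Rightarrow> 'i \<Rightarrow> 'k fls fps" where
  "rW W = (\<lambda>j i. Abs_fps (\<lambda>k. wW W k i j))"

definition r0W :: "('i \<Rightarrow> 'k::field fls) set \<Rightarrow> 'i \<Rightarrow> 'i \<Rightarrow> 'k fps fps" where
  "r0W W = (\<lambda>j i. Abs_fps (\<lambda>k. fls_regpart (wW W k i j)))"

lemma wW_prop:
  assumes "complementary_to_power_series W"
  shows "wW W k i \<in> W \<and> Xv k i - wW W k i \<in> g_power_series"
proof -
  obtain u w where "u \<in> g_power_series" "w \<in> W" "Xv k i = u + w"
    using assms unfolding complementary_to_power_series_def by blast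
  then have "\<exists>w. w \<in> W \<and> Xv k i - w \<in> g_power_series" by (intro exI[of _ w]) simp
  then show ?thesis unfolding wW_def by (rule someI_ex)
qed

lemma wW_neg:
  assumes "complementary_to_power_series W" "m < 0"
  shows "wW W k i j $$ m = (if j = i \<and> m = - int k - 1 then 1 else 0)"
proof -
  have "(Xv k i - wW W k i) j $$ m = 0"
    using wW_prop[OF assms(1)] assms(2) by (simp add: PS_iff)
  then have "wW W k i j $$ m = Xv k i j $$ m" by simp
  then show ?thesis by (cases "j = i") (simp_all add: Xv_def)
qed

lemma std_rW:
  assumes "complementary_to_power_series W"
  shows "std (rW W) (r0W W)"
  unfolding std_def
proof (intro allI fps_ext fls_eqI)
  fix j i k m
  show "rW W j i $ k $$ m = (gamma_kernel j i + embed2 (r0W W j i)) $ k $$ m"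
    using wW_neg[OF assms, of m k i j]
    by (cases "m < 0") (simp_all add: rW_def r0W_def gamma_nth)
qed

lemma col_rW: "col (rW W) k i = wW W k i"
  by (rule ext) (simp add: col_nth rW_def)

lemma g_of_rW:
  fixes W :: "('i::finite \<Rightarrow> 'k::field fls) set"
  assumes C: "complementary_to_power_series W" and sub: "lsm.subspace W"
  shows "g_of (rW W) = W"
proof -
  have A: "g_of (rW W) \<subseteq> W"
    unfolding g_of_span
    by (rule lsm.span_minimal[OF _ sub]) (auto simp: gens_def col_rW wW_prop[OF C])
  have "W \<subseteq> g_of (rW W)"
  proof
    fix v assume v: "v \<in> W"
    obtain u w where u: "u \<in> g_power_series" and w: "w \<in> g_of (rW W)" and vw: "v = u + w"
      using decomp[OF std_rW[OF C], of v] by blast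
    have "w \<in> W" using w A by blast
    then have "u \<in> W" using vw v lsm.subspace_diff[OF sub v] by (metis add_diff_cancel_right')
    then have "u = 0" using u C unfolding complementary_to_power_series_def by blast
    then show "v \<in> g_of (rW W)" using vw w by simp
  qed
  then show ?thesis using A by blast
qed

lemma gcybe_rW:
  fixes c :: "'i::finite \<Rightarrow> 'i \<Rightarrow> 'i \<Rightarrow> 'k::field"
  assumes L: "is_lie_algebra_sc c"
    and K: "\<forall>i j. killing_sc c i j = (if i = j then 1 else 0)"
    and C: "complementary_to_power_series W" and Sub: "lie_subalgebra_loop c W"
  shows "gcybe_coord c (rW W) p q s = 0"
proof -
  let ?r = "rW W"
  have S: "std ?r (r0W W)" by (rule std_rW[OF C])
  have sub: "lsm.subspace W" and cl: "\<forall>u\<in>W. \<forall>v\<in>W. lie_br (\<lambda>i j p. fls_const (c i j p)) u v \<in> W"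
    using Sub unfolding lie_subalgebra_loop_def by auto
  have gW: "g_of ?r = W" by (rule g_of_rW[OF C sub])
  have "\<And>l k. (\<lambda>p. gcybe_coord c ?r p q s $ l $$ k) = 0"
  proof -
    fix l k
    define V where "V = T1v c ?r q s l k + T2v c ?r q s l k + T3v c ?r q s l k"
    have Veq: "(\<lambda>p. gcybe_coord c ?r p q s $ l $$ k) = V"
      unfolding V_def by (rule ext) (simp add: gcybe_nth[OF S])
    have "T1v c ?r q s l k \<in> W"
    proof (cases "k < 0")
      case True
      then have z: "T1v c ?r q s l k = 0" by (simp only: T1v_lie if_True)
      show ?thesis unfolding z by (rule lsm.subspace_0[OF sub])
    next
      case False
      have a: "col ?r (nat k) q \<in> W" "col ?r l s \<in> W"
        using col_in_g_of[of ?r "nat k" q] col_in_g_of[of ?r l s] unfolding gW by auto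
      have "T1v c ?r q s l k = lie_br (\<lambda>i j p. fls_const (c i j p)) (col ?r (nat k) q) (col ?r l s)"
        using False by (simp only: T1v_lie if_False)
      then show ?thesis using cl a(1) a(2) by simp
    qed
    moreover have "T2v c ?r q s l k \<in> W" "T3v c ?r q s l k \<in> W"
      using T2v_in[of c ?r q s l k] T3v_in[of c ?r q s l k] unfolding gW by auto
    ultimately have VW: "V \<in> W" unfolding V_def by (intro lsm.subspace_add[OF sub])
    have VP: "V \<in> g_power_series"
      unfolding PS_iff V_def using principal_zero[OF L K S] by simp
    have "V \<in> g_power_series \<inter> W" using VW VP by simp
    then have "V = 0" using C unfolding complementary_to_power_series_def by simp
    then show "(\<lambda>p. gcybe_coord c ?r p q s $ l $$ k) = 0" using Veq by simp
  qed
  then have "\<And>l k. gcybe_coord c ?r p q s $ l $$ k = 0" by (metis fun_eq_iff zero_fun_def)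
  then show ?thesis
    by (intro fps_ext fls_eqI) simp
qed



theorem proposition1p9:
  fixes c :: "'i::finite \<Rightarrow> 'i \<Rightarrow> 'i \<Rightarrow> 'k::field_char_0"
  assumes "is_lie_algebra_sc c"
    and "semisimple_sc c"
    and "\<forall>i j. killing_sc c i j = (if i = j then 1 else 0)"
  shows "bij_betw (g_of :: ('i \<Rightarrow> 'i \<Rightarrow> 'k fls fps) \<Rightarrow> _)
           {r. normalized_formal_generalized_r_matrix c r}
           {W. lie_subalgebra_loop c W \<and> complementary_to_power_series W}"
proof -
  let ?A = "{r :: 'i \<Rightarrow> 'i \<Rightarrow> 'k fls fps. normalized_formal_generalized_r_matrix c r}"
  let ?B = "{W. lie_subalgebra_loop c W \<and> complementary_to_power_series W}"
  have inj: "inj_on g_of ?A"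
  proof (rule inj_onI)
    fix r r' assume "r \<in> ?A" "r' \<in> ?A" "g_of r = g_of r'"
    then obtain r0 r0' where "std r r0" "std r' r0'"
      unfolding normalized_formal_generalized_r_matrix_def nsf_std by auto
    then show "r = r'" using inj_std \<open>g_of r = g_of r'\<close> by blast
  qed
  have sub1: "g_of ` ?A \<subseteq> ?B"
  proof
    fix W assume "W \<in> g_of ` ?A"
    then obtain r where r: "r \<in> ?A" and W: "W = g_of r" by blast
    from r obtain r0 where S: "std r r0" and G: "\<forall>p q s. gcybe_coord c r p q s = 0"
      unfolding normalized_formal_generalized_r_matrix_def nsf_std by auto
    show "W \<in> ?B" unfolding W using gcybe_sub[OF S G] compl[OF S] by simp
  qed
  have sub2: "?B \<subseteq> g_of ` ?A"
  proof
    fix W assume "W \<in> ?B"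
    then have Sub: "lie_subalgebra_loop c W" and C: "complementary_to_power_series W" by auto
    have sub: "lsm.subspace W" using Sub unfolding lie_subalgebra_loop_def by auto
    have "rW W \<in> ?A"
      unfolding normalized_formal_generalized_r_matrix_def nsf_std
      using std_rW[OF C] gcybe_rW[OF assms(1) assms(3) C Sub] by blast
    moreover have "g_of (rW W) = W" by (rule g_of_rW[OF C sub])
    ultimately show "W \<in> g_of ` ?A" by (metis image_eqI)
  qed
  show ?thesis unfolding bij_betw_def using inj sub1 sub2 by blast
qed



end
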